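(* Let $n,m\ge 1$, $X=\{x_1,\dots,x_m\}$, and for each $1\le i\le n$ let $A_i,B_i$ be nonempty subsets of $X$ with $A_i\cap B_i=\emptyset$. Let $Y=\{y_1,\dots,y_n\}$ be a set disjoint from $X$, and let $\Sigma'$ be the set of implications on $X\cup Y$ consisting of $(A_i\cup (Y\setminus\{y_i\}))\rightarrow B_i$ for $1\le i\le n$, together with $Y\rightarrow X$. Then the closure system on $X\cup Y$ associated with $\Sigma'$ is a convex geometry.
   Context: A closure operator on a set $X$ is a map $\phi:\mathcal P(X)\to\mathcal P(X)$ that is extensive, monotone and idempotent; its image consists of the closed sets. An implication on a set $Z$ is a pair $A\rightarrow B$ with $A,B\subseteq Z$, $B\ne\emptyset$. For a set $\Sigma$ of implications on $Z$, the associated closure system has as closed sets exactly the $S\subseteq Z$ such that $A\subseteq S$ implies $B\subseteq S$ for every $(A\rightarrow B)\in\Sigma$. A convex geometry is a finite closure system $\langle Z,\phi\rangle$ with $\phi(\emptyset)=\emptyset$ satisfying the anti-exchange property: for every closed set $A\subsetneq Z$ and all distinct $x,y\in Z\setminus A$, $y\notin\phi(A\cup\{x\})$ or $x\notin\phi(A\cup\{y\})$ (equivalently, for every closed $A\subsetneq Z$ there is $x\in Z\setminus A$ with $A\cup\{x\}$ closed). *)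

theory Defs
  imports Main
begin

definition is_implication_on :: "'a set \<Rightarrow> 'a set \<times> 'a set \<Rightarrow> bool" where
  "is_implication_on Z imp \<longleftrightarrow> fst imp \<subseteq> Z \<and> snd imp \<subseteq> Z \<and> snd imp \<noteq> {}"

definition imp_closed :: "'a set \<Rightarrow> ('a set \<times> 'a set) set \<Rightarrow> 'a set \<Rightarrow> bool" where
  "imp_closed Z \<Sigma> S \<longleftrightarrow> S \<subseteq> Z \<and> (\<forall>(A, B) \<in> \<Sigma>. A \<subseteq> S \<longrightarrow> B \<subseteq> S)"

definition imp_closure :: "'a set \<Rightarrow> ('a set \<times> 'a set) set \<Rightarrow> 'a set \<Rightarrow> 'a set" where
  "imp_closure Z \<Sigma> S = \<Inter> {C. imp_closed Z \<Sigma> C \<and> S \<subseteq> C}"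

definition closure_operator :: "'a set \<Rightarrow> ('a set \<Rightarrow> 'a set) \<Rightarrow> bool" where
  "closure_operator Z \<phi> \<longleftrightarrow>
     (\<forall>S. S \<subseteq> Z \<longrightarrow> S \<subseteq> \<phi> S \<and> \<phi> S \<subseteq> Z) \<and>
     (\<forall>S T. S \<subseteq> T \<and> T \<subseteq> Z \<longrightarrow> \<phi> S \<subseteq> \<phi> T) \<and>
     (\<forall>S. S \<subseteq> Z \<longrightarrow> \<phi> (\<phi> S) = \<phi> S)"

definition convex_geometry :: "'a set \<Rightarrow> ('a set \<Rightarrow> 'a set) \<Rightarrow> bool" where
  "convex_geometry Z \<phi> \<longleftrightarrow>
     finite Z \<and> closure_operator Z \<phi> \<and> \<phi> {} = {} \<and>
     (\<forall>A x y. A \<subseteq> Z \<and> \<phi> A = A \<and> A \<noteq> Z \<and> x \<in> Z - A \<and> y \<in> Z - A \<and> x \<noteq> y \<longrightarrow>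
        y \<notin> \<phi> (A \<union> {x}) \<or> x \<notin> \<phi> (A \<union> {y}))"

end

theory Submission
  imports Defs
begin

lemma ball_pairs: "(\<forall>(a, b)\<in>{(f i, g i) | i. i \<in> I}. P a b) \<longleftrightarrow> (\<forall>i\<in>I. P (f i) (g i))"
  by auto

lemma closure_least: "imp_closed Z S C \<Longrightarrow> T \<subseteq> C \<Longrightarrow> imp_closure Z S T \<subseteq> C"
  unfolding imp_closure_def by blast

lemma closure_ext: "T \<subseteq> imp_closure Z S T"
  unfolding imp_closure_def by blast

lemma inter_closed: "\<forall>C\<in>F. imp_closed Z S C \<Longrightarrow> F \<noteq> {} \<Longrightarrow> imp_closed Z S (\<Inter>F)"
proof -
  assume h: "\<forall>C\<in>F. imp_closed Z S C" "F \<noteq> {}"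
  have "\<Inter>F \<subseteq> Z" using h unfolding imp_closed_def by blast
  moreover have "B \<subseteq> \<Inter>F" if "(A, B) \<in> S" "A \<subseteq> \<Inter>F" for A B
  proof (rule Inter_greatest)
    fix C assume C: "C \<in> F"
    then have "A \<subseteq> C" using that(2) by blast
    moreover have "imp_closed Z S C" using h C by blast
    ultimately show "B \<subseteq> C" using that(1) unfolding imp_closed_def by blast
  qed
  ultimately show ?thesis unfolding imp_closed_def by blast
qed

lemma closure_closed:
  assumes "imp_closed Z S Z" "T \<subseteq> Z"
  shows "imp_closed Z S (imp_closure Z S T)"
  unfolding imp_closure_def
  by (rule inter_closed) (use assms in auto)

lemma closure_of_closed: "imp_closed Z S T \<Longrightarrow> imp_closure Z S T = T"
  by (rule subset_antisym[OF closure_least[OF _ order_refl] closure_ext])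

lemma closure_sub: "imp_closed Z S Z \<Longrightarrow> T \<subseteq> Z \<Longrightarrow> imp_closure Z S T \<subseteq> Z"
  by (rule closure_least)

lemma closure_mono: "T \<subseteq> U \<Longrightarrow> imp_closure Z S T \<subseteq> imp_closure Z S U"
  unfolding imp_closure_def by blast

lemma closure_op: "imp_closed Z S Z \<Longrightarrow> closure_operator Z (imp_closure Z S)"
  unfolding closure_operator_def
proof (intro conjI allI impI)
  fix T assume a: "imp_closed Z S Z" and b: "T \<subseteq> Z"
  show "T \<subseteq> imp_closure Z S T" by (rule closure_ext)
  show "imp_closure Z S T \<subseteq> Z" by (rule closure_sub[OF a b])
next
  fix T U assume "T \<subseteq> U \<and> U \<subseteq> Z"
  then show "imp_closure Z S T \<subseteq> imp_closure Z S U" by (intro closure_mono) simp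
next
  fix T assume a: "imp_closed Z S Z" and b: "T \<subseteq> Z"
  show "imp_closure Z S (imp_closure Z S T) = imp_closure Z S T"
    by (rule closure_of_closed[OF closure_closed[OF a b]])
qed

theorem claim1:
  fixes X :: "'a set" and x y :: "nat \<Rightarrow> 'a" and A B :: "nat \<Rightarrow> 'a set" and n m :: nat
  assumes "n \<ge> 1" and "m \<ge> 1"
    and "X = x ` {1..m}" and "inj_on x {1..m}"
    and "\<And>i. i \<in> {1..n} \<Longrightarrow> A i \<subseteq> X \<and> B i \<subseteq> X \<and> A i \<noteq> {} \<and> B i \<noteq> {} \<and> A i \<inter> B i = {}"
    and "inj_on y {1..n}" and "y ` {1..n} \<inter> X = {}"
  shows "convex_geometry (X \<union> y ` {1..n})
           (imp_closure (X \<union> y ` {1..n})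
              ({(A i \<union> (y ` {1..n} - {y i}), B i) | i. i \<in> {1..n}} \<union> {(y ` {1..n}, X)}))"
proof -
  define Y where "Y = y ` {1..n}"
  define Z where "Z = X \<union> Y"
  define S where "S = {(A i \<union> (y ` {1..n} - {y i}), B i) | i. i \<in> {1..n}} \<union> {(y ` {1..n}, X)}"
  have AB: "\<And>i. i \<in> {1..n} \<Longrightarrow> A i \<subseteq> X \<and> B i \<subseteq> X \<and> A i \<noteq> {} \<and> B i \<noteq> {} \<and> A i \<inter> B i = {}"
    by fact
  have injy: "inj_on y {1..n}" by fact
  have disj: "Y \<inter> X = {}" using assms(7) Y_def by simp
  have char: "imp_closed Z S T \<longleftrightarrow> T \<subseteq> Z \<and>
      (\<forall>i\<in>{1..n}. A i \<union> (Y - {y i}) \<subseteq> T \<longrightarrow> B i \<subseteq> T) \<and> (Y \<subseteq> T \<longrightarrow> X \<subseteq> T)" for T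
  proof -
    have "(\<forall>(a, b)\<in>S. a \<subseteq> T \<longrightarrow> b \<subseteq> T) \<longleftrightarrow>
      (\<forall>i\<in>{1..n}. A i \<union> (Y - {y i}) \<subseteq> T \<longrightarrow> B i \<subseteq> T) \<and> (Y \<subseteq> T \<longrightarrow> X \<subseteq> T)"
      unfolding S_def Y_def[symmetric] ball_Un ball_pairs[where P="\<lambda>a b. a \<subseteq> T \<longrightarrow> b \<subseteq> T"] by simp
    then show ?thesis unfolding imp_closed_def by simp
  qed
  have BX: "\<forall>i\<in>{1..n}. B i \<subseteq> X" using AB by blast
  have Zc: "imp_closed Z S Z" by (subst char) (use BX in \<open>auto simp: Z_def\<close>)
  have finZ: "finite Z" unfolding Z_def Y_def using assms(3) by simp
  have emp: "imp_closed Z S {}" by (subst char) (use AB assms(1) in \<open>force simp: Y_def\<close>)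
  have one: "imp_closed Z S T" if "T \<subseteq> Z" "l \<in> {1..n}" "y l \<notin> T" "A l \<subseteq> T \<longrightarrow> B l \<subseteq> T" for T l
  proof -
    have "B i \<subseteq> T" if "i \<in> {1..n}" "A i \<union> (Y - {y i}) \<subseteq> T" for i
    proof (cases "i = l")
      case True then show ?thesis using that \<open>A l \<subseteq> T \<longrightarrow> B l \<subseteq> T\<close> by auto
    next
      case False
      then have "y l \<noteq> y i" using injy \<open>l \<in> {1..n}\<close> \<open>i \<in> {1..n}\<close> by (metis inj_onD)
      then have "y l \<in> Y - {y i}" using \<open>l \<in> {1..n}\<close> Y_def by auto
      then show ?thesis using that \<open>y l \<notin> T\<close> by auto
    qed
    moreover have "\<not> Y \<subseteq> T" using that Y_def by blast
    ultimately show ?thesis unfolding char using that by auto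
  qed
  have two: "imp_closed Z S T" if "T \<subseteq> Z" "k \<in> {1..n}" "l \<in> {1..n}" "k \<noteq> l" "y l \<notin> T" "y k \<notin> T" for T k l
  proof -
    have "B i \<subseteq> T" if "i \<in> {1..n}" "A i \<union> (Y - {y i}) \<subseteq> T" for i
    proof (cases "i = l")
      case True
      then have "y k \<noteq> y i" using injy \<open>k \<in> {1..n}\<close> \<open>i \<in> {1..n}\<close> \<open>k \<noteq> l\<close> by (metis inj_onD)
      then have "y k \<in> Y - {y i}" using \<open>k \<in> {1..n}\<close> Y_def by auto
      then show ?thesis using that \<open>y k \<notin> T\<close> by auto
    next
      case False
      then have "y l \<noteq> y i" using injy \<open>l \<in> {1..n}\<close> \<open>i \<in> {1..n}\<close> by (metis inj_onD)
      then have "y l \<in> Y - {y i}" using \<open>l \<in> {1..n}\<close> Y_def by auto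
      then show ?thesis using that \<open>y l \<notin> T\<close> by auto
    qed
    moreover have "\<not> Y \<subseteq> T" using that Y_def by blast
    ultimately show ?thesis unfolding char using that by auto
  qed
  have wit: "q \<notin> imp_closure Z S T" if "imp_closed Z S C" "T \<subseteq> C" "q \<notin> C" for C T q
    using closure_least that by blast
  have anti: "q \<notin> imp_closure Z S (P \<union> {p}) \<or> p \<notin> imp_closure Z S (P \<union> {q})"
    if P: "P \<subseteq> Z" "imp_closure Z S P = P" "P \<noteq> Z" "p \<in> Z - P" "q \<in> Z - P" "p \<noteq> q" for P p q
  proof -
    have Pc: "imp_closed Z S P" using closure_closed[OF Zc P(1)] P(2) by simp
    have "\<not> Y \<subseteq> P" using Pc[unfolded char] P(1,3) unfolding Z_def by auto
    then obtain j where j: "j \<in> {1..n}" "y j \<notin> P" unfolding Y_def by blast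
    have BjX: "B j \<subseteq> X" using AB j(1) by auto
    have yX: "y i \<notin> X" if "i \<in> {1..n}" for i using disj that unfolding Y_def by blast
    show ?thesis
    proof (cases "\<exists>k\<in>{1..n}. k \<noteq> j \<and> y k \<notin> P")
      case True
      then obtain k where k: "k \<in> {1..n}" "k \<noteq> j" "y k \<notin> P" by auto
      have ykj: "y k \<noteq> y j" using injy k j by (metis inj_onD)
      show ?thesis
      proof (cases "p \<notin> {y j, y k}")
        case True
        have "imp_closed Z S (P \<union> {p})" using two[of "P \<union> {p}" k j] P True k j by auto
        then show ?thesis using wit[of "P \<union> {p}" "P \<union> {p}" q] P by auto
      next
        case pin: False
        show ?thesis
        proof (cases "q \<notin> {y j, y k}")
          case True
          have "imp_closed Z S (P \<union> {q})" using two[of "P \<union> {q}" k j] P True k j by auto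
          then show ?thesis using wit[of "P \<union> {q}" "P \<union> {q}" p] P by auto
        next
          case False
          then obtain l where l: "l \<in> {1..n}" "q = y l" using k j by auto
          have "p \<noteq> y l" using l P by auto
          have Bl: "B l \<subseteq> X" using AB l(1) by auto
          have "imp_closed Z S (P \<union> {p} \<union> B l)"
            apply (rule one[of _ l])
            using P l Bl yX[OF l(1)] \<open>p \<noteq> y l\<close> unfolding Z_def by auto
          then show ?thesis using wit[of "P \<union> {p} \<union> B l" "P \<union> {p}" q] P l yX[OF l(1)] Bl by auto
        qed
      qed
    next
      case False
      then have Ysub: "Y - {y j} \<subseteq> P" unfolding Y_def by auto
      have PA: "A j \<subseteq> P \<longrightarrow> B j \<subseteq> P" using Pc[unfolded char] Ysub j by blast
      show ?thesis
      proof (cases "p = y j")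
        case True
        have "imp_closed Z S (P \<union> {q} \<union> B j)"
          apply (rule one[of _ j])
          using P j BjX yX[OF j(1)] True unfolding Z_def by auto
        then show ?thesis using wit[of "P \<union> {q} \<union> B j" "P \<union> {q}" p] P j yX[OF j(1)] BjX True by auto
      next
        case pnj: False
        show ?thesis
        proof (cases "q = y j")
          case True
          have "imp_closed Z S (P \<union> {p} \<union> B j)"
            apply (rule one[of _ j])
            using P j BjX yX[OF j(1)] True unfolding Z_def by auto
          then show ?thesis using wit[of "P \<union> {p} \<union> B j" "P \<union> {p}" q] P j yX[OF j(1)] BjX True by auto
        next
          case qnj: False
          show ?thesis
          proof (cases "q \<in> B j")
            case False
            have "imp_closed Z S (P \<union> {p} \<union> B j)"
              apply (rule one[of _ j])
              using P j BjX yX[OF j(1)] pnj unfolding Z_def by auto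
            then show ?thesis using wit[of "P \<union> {p} \<union> B j" "P \<union> {p}" q] P False by auto
          next
            case qB: True
            show ?thesis
            proof (cases "p \<in> B j")
              case False
              have "imp_closed Z S (P \<union> {q} \<union> B j)"
                apply (rule one[of _ j])
                using P j BjX yX[OF j(1)] qnj unfolding Z_def by auto
              then show ?thesis using wit[of "P \<union> {q} \<union> B j" "P \<union> {q}" p] P False by auto
            next
              case pB: True
              have "p \<notin> A j" using pB AB j(1) by auto
              then have "imp_closed Z S (P \<union> {p})"
                apply (intro one[of _ j])
                using P j PA pnj by auto
              then show ?thesis using wit[of "P \<union> {p}" "P \<union> {p}" q] P by auto
            qed
          qed
        qed
      qed
    qed
  qed
  have "convex_geometry Z (imp_closure Z S)"
    unfolding convex_geometry_def
  proof (intro conjI allI impI)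
    show "finite Z" by (rule finZ)
    show "closure_operator Z (imp_closure Z S)" by (rule closure_op[OF Zc])
    show "imp_closure Z S {} = {}" by (rule closure_of_closed[OF emp])
    fix P p q
    assume h: "P \<subseteq> Z \<and> imp_closure Z S P = P \<and> P \<noteq> Z \<and> p \<in> Z - P \<and> q \<in> Z - P \<and> p \<noteq> q"
    show "q \<notin> imp_closure Z S (P \<union> {p}) \<or> p \<notin> imp_closure Z S (P \<union> {q})"
      using h by (intro anti) auto
  qed
  then show ?thesis unfolding Z_def Y_def S_def .
qed

end
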